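(* Let $c,h\in\mathbb{N}$ with $c>2(h+1)$, let $\ell=c2^h+1$, let $n\ge\ell$, and let $\underline{\eta}=(\eta_1<\dots<\eta_s)$ be positive integer thresholds whose largest threshold is $\eta_s=2^{h-1}+2$. Then there exists a $c\times n$ binary matrix $\mathbf{R}$, depending only on $n$, $h$, $c$ (hence only on $n,\ell$ and $\eta_s$, not on the other thresholds), such that for all $i,j\in\{0,\dots,n-\ell\}$ with $0<|i-j|<2\ell$, $\underline{\eta}(\mathbf{R}\mathbf{b}_i)\neq\underline{\eta}(\mathbf{R}\mathbf{b}_j)$. (Note $c\approx\ell/(2\eta_s)$.)
   Context: Items are indexed $0,\dots,n-1$; $\mathbf{b}_i\in\{0,1\}^n$ is the burst of length $\ell$ with head $i$ (coordinates $i,\dots,i+\ell-1$ equal to $1$). The SQGT outcome of a nonnegative integer $y$ is $\underline{\eta}(y)=|\{k:\eta_k\le y\}|$, applied entrywise to vectors. *)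

theory Defs
  imports Main
begin

definition burst :: "nat \<Rightarrow> nat \<Rightarrow> nat \<Rightarrow> nat \<Rightarrow> nat" where
  "burst n l i k = (if i \<le> k \<and> k < i + l \<and> k < n then 1 else 0)"

definition matvec :: "nat \<Rightarrow> nat \<Rightarrow> (nat \<Rightarrow> nat \<Rightarrow> nat) \<Rightarrow> (nat \<Rightarrow> nat) \<Rightarrow> nat list" where
  "matvec c n R x = map (\<lambda>r. \<Sum>k<n. R r k * x k) [0..<c]"

definition sqgt :: "nat list \<Rightarrow> nat \<Rightarrow> nat" where
  "sqgt eta y = card {k. k < length eta \<and> eta ! k \<le> y}"

definition sqgt_vec :: "nat list \<Rightarrow> nat list \<Rightarrow> nat list" where
  "sqgt_vec eta ys = map (sqgt eta) ys"

end

theory Submission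
  imports Defs
begin


fun dnP :: "('a \<Rightarrow> bool) \<Rightarrow> 'a list \<Rightarrow> nat" where
  "dnP p (x # y # zs) = (if p x \<and> \<not> p y then 1 else 0) + dnP p (y # zs)"
| "dnP p _ = 0"

fun upP :: "('a \<Rightarrow> bool) \<Rightarrow> 'a list \<Rightarrow> nat" where
  "upP p (x # y # zs) = (if \<not> p x \<and> p y then 1 else 0) + upP p (y # zs)"
| "upP p _ = 0"

lemma dnP_append: "xs \<noteq> [] \<Longrightarrow> ys \<noteq> [] \<Longrightarrow>
  dnP p (xs @ ys) = dnP p xs + (if p (last xs) \<and> \<not> p (hd ys) then 1 else 0) + dnP p ys"
proof (induction xs rule: induct_list012)
  case 1 then show ?case by simp
next
  case (2 x) then show ?case by (cases ys) auto
next
  case (3 x y zs) then show ?case by simp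
qed

lemma upP_append: "xs \<noteq> [] \<Longrightarrow> ys \<noteq> [] \<Longrightarrow>
  upP p (xs @ ys) = upP p xs + (if \<not> p (last xs) \<and> p (hd ys) then 1 else 0) + upP p ys"
proof (induction xs rule: induct_list012)
  case 1 then show ?case by simp
next
  case (2 x) then show ?case by (cases ys) auto
next
  case (3 x y zs) then show ?case by simp
qed

lemma dnP_rev: "dnP p (rev xs) = upP p xs"
proof (induction xs rule: induct_list012)
  case 1 then show ?case by simp
next
  case (2 x) then show ?case by simp
next
  case (3 x y zs)
  have e: "rev (x # y # zs) = rev (y # zs) @ [x]" by simp
  have "dnP p (rev (y # zs) @ [x]) = dnP p (rev (y # zs)) + (if p (last (rev (y # zs))) \<and> \<not> p (hd [x]) then 1 else 0) + dnP p [x]"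
    by (rule dnP_append) auto
  then show ?case using 3 e by (simp add: last_rev)
qed

lemma upP_rev: "upP p (rev xs) = dnP p xs"
  by (metis dnP_rev rev_rev_ident)

lemma dnP_map: "dnP p (map f xs) = dnP (p \<circ> f) xs"
  by (induction xs rule: induct_list012) auto

lemma upP_map: "upP p (map f xs) = upP (p \<circ> f) xs"
  by (induction xs rule: induct_list012) auto

lemma dnP_cong: "(\<And>x. x \<in> set xs \<Longrightarrow> p x = q x) \<Longrightarrow> dnP p xs = dnP q xs"
  by (induction xs rule: induct_list012) auto

lemma upP_cong: "(\<And>x. x \<in> set xs \<Longrightarrow> p x = q x) \<Longrightarrow> upP p xs = upP q xs"
  by (induction xs rule: induct_list012) auto

lemma dnP_const: "dnP (\<lambda>_. b) xs = 0"
  by (induction xs rule: induct_list012) auto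

lemma upP_const: "upP (\<lambda>_. b) xs = 0"
  by (induction xs rule: induct_list012) auto

lemma dnP_sum: "dnP p xs = (\<Sum>y<length xs - 1. if p (xs!y) \<and> \<not> p (xs ! Suc y) then 1 else 0)"
proof (induction xs rule: induct_list012)
  case 1 then show ?case by simp
next
  case (2 x) then show ?case by simp
next
  case (3 x y zs)
  have "length (x # y # zs) - 1 = Suc (length (y # zs) - 1)" by simp
  then show ?case using 3 by (simp only: sum.lessThan_Suc_shift) simp
qed

fun gray :: "nat \<Rightarrow> nat set list" where
  "gray 0 = [{}]"
| "gray (Suc n) = gray n @ map (insert n) (rev (gray n))"

lemma gray_ne: "gray n \<noteq> []"
  by (induction n) auto

lemma gray_len: "length (gray n) = 2 ^ n"
  by (induction n) auto

lemma gray_sub: "A \<in> set (gray n) \<Longrightarrow> A \<subseteq> {..<n}"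
proof (induction n arbitrary: A)
  case 0 then show ?case by simp
next
  case (Suc n)
  then show ?case by (auto simp: subset_eq) (meson less_Suc_eq lessThan_iff subset_eq)+
qed

lemma gray_hd: "hd (gray n) = {}"
  by (induction n) (auto simp: gray_ne)

lemma gray_last: "last (gray n) = (if n = 0 then {} else {n - 1})"
proof (induction n)
  case 0 then show ?case by simp
next
  case (Suc n)
  have "last (gray (Suc n)) = last (map (insert n) (rev (gray n)))" using gray_ne by simp
  also have "\<dots> = insert n (hd (gray n))" using gray_ne by (simp add: last_map last_rev)
  finally show ?case by (simp add: gray_hd)
qed

lemma gray_distinct: "distinct (gray n)"
proof (induction n)
  case 0 then show ?case by simp
next
  case (Suc n)
  have inj: "inj_on (insert n) (set (rev (gray n)))"
    using gray_sub by (force simp: inj_on_def)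
  have "set (gray n) \<inter> set (map (insert n) (rev (gray n))) = {}"
    using gray_sub by fastforce
  then show ?case using Suc inj by (simp add: distinct_map)
qed

definition Dg :: "nat \<Rightarrow> nat \<Rightarrow> nat" where "Dg n j = dnP (\<lambda>A. j \<in> A) (gray n)"
definition Ug :: "nat \<Rightarrow> nat \<Rightarrow> nat" where "Ug n j = upP (\<lambda>A. j \<in> A) (gray n)"

lemma Dg_big: "n \<le> j \<Longrightarrow> Dg n j = 0"
proof -
  assume "n \<le> j"
  then have "dnP (\<lambda>A. j \<in> A) (gray n) = dnP (\<lambda>_. False) (gray n)"
    by (intro dnP_cong) (use gray_sub in fastforce)
  then show ?thesis by (simp add: Dg_def dnP_const)
qed

lemma Ug_big: "n \<le> j \<Longrightarrow> Ug n j = 0"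
proof -
  assume "n \<le> j"
  then have "upP (\<lambda>A. j \<in> A) (gray n) = upP (\<lambda>_. False) (gray n)"
    by (intro upP_cong) (use gray_sub in fastforce)
  then show ?thesis by (simp add: Ug_def upP_const)
qed

lemma hd_map_ins: "hd (map (insert n) (rev (gray n))) = insert n (last (gray n))"
  using gray_ne by (simp add: hd_map hd_rev)

lemma Dg_Suc: "j < n \<Longrightarrow> Dg (Suc n) j = Dg n j + Ug n j"
proof -
  assume j: "j < n"
  have "dnP (\<lambda>A. j \<in> A) (map (insert n) (rev (gray n))) = dnP (\<lambda>A. j \<in> A) (rev (gray n))"
    unfolding dnP_map using j by (intro dnP_cong) auto
  moreover have "\<not> ((j \<in> last (gray n)) \<and> j \<notin> insert n (last (gray n)))" by auto
  ultimately show ?thesis using gray_ne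
    by (simp add: Dg_def Ug_def dnP_append hd_map_ins dnP_rev)
qed

lemma Ug_Suc: "j < n \<Longrightarrow> Ug (Suc n) j = Ug n j + Dg n j"
proof -
  assume j: "j < n"
  have "upP (\<lambda>A. j \<in> A) (map (insert n) (rev (gray n))) = upP (\<lambda>A. j \<in> A) (rev (gray n))"
    unfolding upP_map using j by (intro upP_cong) auto
  moreover have "\<not> ((j \<notin> last (gray n)) \<and> j \<in> insert n (last (gray n)))" using j by auto
  ultimately show ?thesis using gray_ne
    by (simp add: Dg_def Ug_def upP_append hd_map_ins upP_rev)
qed

lemma Dg_top: "Dg (Suc n) n = 0"
proof -
  have "dnP (\<lambda>A. n \<in> A) (map (insert n) (rev (gray n))) = 0"
    unfolding dnP_map by (simp add: comp_def dnP_const)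
  moreover have "n \<notin> last (gray n)" using gray_sub[of "last (gray n)" n] gray_ne by auto
  ultimately show ?thesis using gray_ne Dg_big[of n n]
    by (simp add: Dg_def dnP_append hd_map_ins)
qed

lemma flips_gray: "(\<Sum>j<n. Dg n j + Ug n j) = 2 ^ n - 1"
proof (induction n)
  case 0 then show ?case by simp
next
  case (Suc n)
  have top: "Ug (Suc n) n = 1"
  proof -
    have "upP (\<lambda>A. n \<in> A) (map (insert n) (rev (gray n))) = 0"
      unfolding upP_map by (simp add: comp_def upP_const)
    moreover have "n \<notin> last (gray n)" using gray_sub[of "last (gray n)" n] gray_ne by auto
    ultimately show ?thesis using gray_ne Ug_big[of n n]
      by (simp add: Ug_def upP_append hd_map_ins)
  qed
  have "(\<Sum>j<Suc n. Dg (Suc n) j + Ug (Suc n) j) = (\<Sum>j<n. Dg (Suc n) j + Ug (Suc n) j) + 1"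
    by (simp add: Dg_top top)
  also have "(\<Sum>j<n. Dg (Suc n) j + Ug (Suc n) j) = (\<Sum>j<n. 2 * (Dg n j + Ug n j))"
    by (intro sum.cong) (auto simp: Dg_Suc Ug_Suc)
  also have "\<dots> = 2 * (\<Sum>j<n. Dg n j + Ug n j)" by (rule sum_distrib_left[symmetric])
  also have "\<dots> = 2 * (2 ^ n - 1)" by (simp only: Suc)
  finally have "(\<Sum>j<Suc n. Dg (Suc n) j + Ug (Suc n) j) = 2 * (2 ^ n - 1) + 1" .
  moreover have "(1::nat) \<le> 2 ^ n" by simp
  moreover obtain k where "(2::nat) ^ n = Suc k" using \<open>1 \<le> 2 ^ n\<close> by (metis Suc_le_D Suc_le_eq le_eq_less_or_eq One_nat_def)
  ultimately show ?case by simp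
qed

lemma downs_gray: "1 \<le> h \<Longrightarrow> (\<Sum>j<h. Dg h j) = 2 ^ (h - 1) - 1"
proof -
  assume "1 \<le> h"
  then obtain n where h: "h = Suc n" by (cases h) auto
  have "(\<Sum>j<Suc n. Dg (Suc n) j) = (\<Sum>j<n. Dg n j + Ug n j)"
    by (simp add: Dg_top Dg_Suc)
  then show ?thesis using h flips_gray by simp
qed



lemma per2: fixes b :: "nat \<Rightarrow> bool" and L q x :: nat assumes anti: "\<And>x. b (x + L) = (\<not> b x)" shows "b (x + 2 * L * q) = b x"
proof (induction q)
  case 0 then show ?case by simp
next
  case (Suc q)
  have e: "x + 2 * L * Suc q = (x + 2 * L * q + L) + L" by simp
  show ?case unfolding e anti[of "x + 2 * L * q + L"] anti[of "x + 2 * L * q"] using Suc by simp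
qed

lemma b_mod: fixes b :: "nat \<Rightarrow> bool" and L i :: nat assumes anti: "\<And>x. b (x + L) = (\<not> b x)" and L: "0 < L"
  shows "b i = (if i mod (2*L) < L then b (i mod L) else \<not> b (i mod L))"
    and "b (Suc i) = (if i mod (2*L) < L then b (Suc (i mod L)) else \<not> b (Suc (i mod L)))"
proof -
  define y where "y = i mod (2*L)"
  have i: "i = y + 2 * L * (i div (2*L))" unfolding y_def by simp
  have y2: "y < 2 * L" unfolding y_def using L by simp
  have bi: "b i = b y" by (subst i, rule per2[where b=b and L=L, OF anti])
  have bs: "b (Suc i) = b (Suc y)" proof -
    have "Suc i = Suc y + 2 * L * (i div (2*L))" using i by simp
    then show ?thesis using per2[where b=b and L=L and x="Suc y" and q="i div (2*L)", OF anti] by simp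
  qed
  have z: "i mod L = y mod L" unfolding y_def by (simp add: mod_mod_cancel)
  show "b i = (if i mod (2*L) < L then b (i mod L) else \<not> b (i mod L))"
  proof (cases "y < L")
    case True then show ?thesis using bi z y_def by simp
  next
    case False
    then have "y = (y - L) + L" "y - L < L" using L y2 by auto
    then have "y mod L = y - L" by (metis mod_add_self2 mod_less)
    then show ?thesis using bi z y_def False anti[of "y - L"] \<open>y = (y - L) + L\<close> by simp
  qed
  show "b (Suc i) = (if i mod (2*L) < L then b (Suc (i mod L)) else \<not> b (Suc (i mod L)))"
  proof (cases "y < L")
    case True then show ?thesis using bs z y_def by simp
  next
    case False
    then have "y = (y - L) + L" "y - L < L" using L y2 by auto
    then have "y mod L = y - L" by (metis mod_add_self2 mod_less)
    moreover have "Suc y = Suc (y - L) + L" using \<open>y = (y - L) + L\<close> by simp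
    ultimately show ?thesis using bs z y_def False anti[of "Suc (y - L)"] by simp
  qed
qed

lemma updown: "int (card {y. y < n \<and> \<not> b y \<and> b (Suc y)}) - int (card {y. y < n \<and> b y \<and> \<not> b (Suc y)})
   = (if b n then 1 else 0) - (if b 0 then 1 else 0)"
proof (induction n)
  case 0 then show ?case by simp
next
  case (Suc n)
  have e: "\<And>P. {y. y < Suc n \<and> P y} = (if P n then insert n {y. y < n \<and> P y} else {y. y < n \<and> P y})"
    by (auto simp: less_Suc_eq)
  show ?case using Suc by (simp only: e) (auto simp: card_insert_if)
qed

lemma realize:
  fixes b :: "nat \<Rightarrow> bool" and L V :: nat
  assumes anti: "\<And>x. b (x + L) = (\<not> b x)" and L: "0 < L"
    and dn: "card {y. y < L \<and> b y \<and> \<not> b (Suc y)} \<le> V + (if b 0 then 1 else 0)"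
    and up: "V + (if b 0 then 1 else 0) + card {y. y < L \<and> \<not> b y \<and> b (Suc y)} \<le> L"
  shows "\<exists>s. (\<forall>x. s x \<le> (1::nat)) \<and> (\<forall>i. (\<Sum>d<L. s (i + d)) = V + (if b i then 1 else 0))"
proof -
  define DN where "DN = {y. y < L \<and> b y \<and> \<not> b (Suc y)}"
  define UP where "UP = {y. y < L \<and> \<not> b y \<and> b (Suc y)}"
  define NC where "NC = {y. y < L \<and> b y = b (Suc y)}"
  define W where "W = V + (if b 0 then 1 else 0)"
  have fin: "finite DN" "finite UP" "finite NC" unfolding DN_def UP_def NC_def by auto
  have d1: "DN \<inter> UP = {}" "(DN \<union> UP) \<inter> NC = {}" unfolding DN_def UP_def NC_def by auto
  have part: "{..<L} = (DN \<union> UP) \<union> NC" unfolding DN_def UP_def NC_def by auto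
  have "card {..<L} = card (DN \<union> UP) + card NC"
    unfolding part using fin d1 by (simp add: card_Un_disjoint)
  also have "card (DN \<union> UP) = card DN + card UP" using fin d1 by (simp add: card_Un_disjoint)
  finally have cL: "L = card DN + card UP + card NC" by simp
  have cNC: "W - card DN \<le> card NC" using up cL unfolding W_def UP_def by simp
  obtain Pd where Pd: "Pd \<subseteq> NC" "card Pd = W - card DN"
    using obtain_subset_with_card_n[OF cNC] by blast
  have finPd: "finite Pd" using Pd fin finite_subset by blast
  define s :: "nat \<Rightarrow> nat" where "s x = (if b (x mod L) \<noteq> b (Suc (x mod L))
     then (if (x mod (2*L) < L) = b (x mod L) then 1 else 0)
     else (if x mod L \<in> Pd then 1 else 0))" for x
  have s1: "\<forall>x. s x \<le> 1" unfolding s_def by auto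
  have key: "s (i + L) + (if b i then 1 else 0) = s i + (if b (Suc i) then 1 else 0)" for i
  proof -
    have m1: "(i + L) mod L = i mod L" by simp
    have m2: "((i + L) mod (2*L) < L) = (\<not> (i mod (2*L) < L))"
    proof -
      define y where "y = i mod (2*L)"
      have y2: "y < 2 * L" unfolding y_def using L by simp
      have e: "(i + L) mod (2*L) = (y + L) mod (2*L)" unfolding y_def by (simp add: mod_add_left_eq)
      show ?thesis
      proof (cases "y < L")
        case True
        then have "(y + L) mod (2*L) = y + L" by simp
        then show ?thesis using e True y_def by simp
      next
        case False
        then have "y + L = (y - L) + 2 * L" by simp
        then have "(y + L) mod (2*L) = (y - L) mod (2*L)" by (metis mod_add_self2)
        also have "\<dots> = y - L" using y2 False by (intro mod_less) simp
        finally have "(y + L) mod (2*L) = y - L" .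
        then show ?thesis using e False y_def y2 by simp
      qed
    qed
    define z where "z = i mod L"
    define P where "P = (i mod (2*L) < L)"
    have bi: "b i = (if P then b z else \<not> b z)" and bs: "b (Suc i) = (if P then b (Suc z) else \<not> b (Suc z))"
      using b_mod[where b=b and L=L and i=i, OF anti L] unfolding z_def P_def by auto
    have si: "s i = (if b z \<noteq> b (Suc z) then (if P = b z then 1 else 0) else (if z \<in> Pd then 1 else 0))"
      unfolding s_def z_def P_def by simp
    have sL: "s (i + L) = (if b z \<noteq> b (Suc z) then (if (\<not> P) = b z then 1 else 0) else (if z \<in> Pd then 1 else 0))"
      unfolding s_def z_def P_def m1 m2 by simp
    show ?thesis unfolding si sL bi bs by (cases P; cases "b z"; cases "b (Suc z)"; simp)
  qed
  have base: "(\<Sum>d<L. s (0 + d)) = W"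
  proof -
    have "(\<Sum>d<L. s (0 + d)) = (\<Sum>d<L. (if d \<in> DN then 1 else 0) + (if d \<in> Pd then 1 else 0))"
    proof (intro sum.cong refl)
      fix d assume "d \<in> {..<L}"
      then have d: "d < L" by simp
      then have "d mod L = d" "d mod (2*L) = d" by auto
      then show "s (0 + d) = (if d \<in> DN then 1 else 0) + (if d \<in> Pd then 1 else 0)"
        using d Pd(1) unfolding s_def DN_def NC_def by auto
    qed
    also have "\<dots> = (\<Sum>d<L. of_bool (d \<in> DN)) + (\<Sum>d<L. of_bool (d \<in> Pd))"
      by (simp add: sum.distrib of_bool_def)
    also have "\<dots> = card ({..<L} \<inter> DN) + card ({..<L} \<inter> Pd)" by simp
    also have "{..<L} \<inter> DN = DN" unfolding DN_def by auto
    also have "{..<L} \<inter> Pd = Pd" using Pd(1) unfolding NC_def by auto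
    finally show ?thesis using Pd dn W_def DN_def by simp
  qed
  have "(\<Sum>d<L. s (i + d)) = V + (if b i then 1 else 0)" for i
  proof (induction i)
    case 0 then show ?case using base W_def by simp
  next
    case (Suc i)
    have "(\<Sum>d<Suc L. s (i + d)) = s (i + 0) + (\<Sum>d<L. s (i + Suc d))"
      by (rule sum.lessThan_Suc_shift)
    moreover have "(\<Sum>d<Suc L. s (i + d)) = (\<Sum>d<L. s (i + d)) + s (i + L)" by simp
    ultimately have "(\<Sum>d<L. s (Suc i + d)) + s i = (\<Sum>d<L. s (i + d)) + s (i + L)" by simp
    then show ?case using Suc key[of i] by simp
  qed
  then show ?thesis using s1 by blast
qed



definition rot :: "nat \<Rightarrow> nat \<Rightarrow> nat set \<Rightarrow> nat set" where
  "rot c t B = (\<lambda>b. (b + t) mod c) ` B"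

lemma mod_cancel_lt0: "(a + t) mod c = (b + t) mod c \<Longrightarrow> a \<le> b \<Longrightarrow> b < (c::nat) \<Longrightarrow> a = b"
proof (rule ccontr)
  assume h: "(a + t) mod c = (b + t) mod c" "a \<le> b" "b < c" "a \<noteq> b"
  then have "c dvd (b + t) - (a + t)" using mod_eq_dvd_iff_nat[of "a + t" "b + t" c] by simp
  then have "c dvd b - a" by simp
  moreover have "0 < b - a" "b - a < c" using h by auto
  ultimately show False using nat_dvd_not_less by blast
qed

lemma mod_cancel_lt: "(a + t) mod c = (b + t) mod c \<Longrightarrow> a < c \<Longrightarrow> b < (c::nat) \<Longrightarrow> a = b"
  by (metis mod_cancel_lt0 nat_le_linear)

lemma rot_mem: assumes "r < c" "t < c" "B \<subseteq> {..<c}"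
  shows "r \<in> rot c t B \<longleftrightarrow> (r + c - t) mod c \<in> B"
proof
  assume "r \<in> rot c t B"
  then obtain b where b: "b \<in> B" "r = (b + t) mod c" unfolding rot_def by auto
  have "b < c" using b assms by auto
  have "(r + c - t) mod c = b" using b \<open>b < c\<close> assms using mod_if by auto
  then show "(r + c - t) mod c \<in> B" using b by simp
next
  assume "(r + c - t) mod c \<in> B"
  moreover have "((r + c - t) mod c + t) mod c = r"
    using assms by (metis mod_if add_diff_inverse_nat mod_add_right_eq add_diff_cancel_right' trans_less_add1 not_add_less2 dual_order.strict_iff_order leD)
  ultimately show "r \<in> rot c t B" unfolding rot_def by (metis image_eqI)
qed

lemma gap_top:
  assumes "2 * h < c" "\<forall>b\<in>B. b \<le> h" "1 \<le> d" "d \<le> h"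
  shows "((h + t) mod c + d) mod c \<notin> rot c t B"
proof
  assume "((h + t) mod c + d) mod c \<in> rot c t B"
  then obtain b where b: "b \<in> B" "((h + t) mod c + d) mod c = (b + t) mod c" unfolding rot_def by auto
  have "((h + t) mod c + d) mod c = (h + t + d) mod c" by (rule mod_add_left_eq)
  also have "h + t + d = h + d + t" by simp
  finally have "((h + t) mod c + d) mod c = (h + d + t) mod c" .
  then have "(h + d + t) mod c = (b + t) mod c" using b by simp
  moreover have "h + d < c" "b < c" using assms b by auto
  ultimately have "h + d = b" using mod_cancel_lt by blast
  then show False using assms b by auto
qed

lemma gap_other:
  assumes "y \<in> rot c t (insert h A)" "A \<subseteq> {..<h}" "y \<noteq> (h + t) mod c"
  shows "\<exists>d. 1 \<le> d \<and> d \<le> h \<and> (y + d) mod c = (h + t) mod c"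
proof -
  obtain b where b: "b \<in> insert h A" "y = (b + t) mod c" using assms(1) unfolding rot_def by auto
  then have "b \<in> A" using assms(3) by auto
  then have bh: "b < h" using assms(2) by auto
  have "(y + (h - b)) mod c = (b + t + (h - b)) mod c" unfolding b(2) by (simp add: mod_add_left_eq)
  also have "b + t + (h - b) = h + t" using bh by simp
  finally show ?thesis using bh by (intro exI[of _ "h - b"]) auto
qed

lemma rot_top: "(h + t) mod c \<in> rot c t (insert h A)"
  unfolding rot_def by (auto simp: add.commute)

lemma seg_unique:
  assumes c: "2 * h < c" and A: "A \<subseteq> {..<h}" "A' \<subseteq> {..<h}" and t: "t < c" "t' < c"
    and eq: "rot c t (insert h A) = rot c t' (insert h A')"
  shows "t = t' \<and> A = A'"
proof -
  let ?x = "(h + t) mod c" and ?x' = "(h + t') mod c"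
  have bnd: "\<forall>b\<in>insert h A. b \<le> h" "\<forall>b\<in>insert h A'. b \<le> h" using A by auto
  have xx: "?x = ?x'"
  proof (rule ccontr)
    assume ne: "?x \<noteq> ?x'"
    have "?x' \<in> rot c t (insert h A)" using eq rot_top by metis
    then obtain d where d: "1 \<le> d" "d \<le> h" "(?x' + d) mod c = ?x"
      using gap_other[OF _ A(1)] ne by metis
    have "?x \<in> rot c t' (insert h A')" using eq rot_top by metis
    moreover have "(?x' + d) mod c \<notin> rot c t' (insert h A')"
      using gap_top[OF c bnd(2) d(1,2)] .
    ultimately show False using d(3) by simp
  qed
  have "t = t'" using mod_cancel_lt[of t h c t'] xx t by (simp add: add.commute)
  moreover have "insert h A = insert h A'"
  proof -
    have inj: "inj_on (\<lambda>b. (b + t) mod c) {..<c}"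
      by (auto simp: inj_on_def intro: mod_cancel_lt)
    have "insert h A \<subseteq> {..<c}" "insert h A' \<subseteq> {..<c}" using A c by auto
    moreover have "(\<lambda>b. (b + t) mod c) ` insert h A = (\<lambda>b. (b + t) mod c) ` insert h A'"
      using eq \<open>t = t'\<close> unfolding rot_def by simp
    ultimately show ?thesis using inj by (simp only: inj_on_image_eq_iff)
  qed
  moreover have "h \<notin> A" "h \<notin> A'" using A by auto
  ultimately show ?thesis by (metis insert_ident)
qed

lemma rot_sub: "rot c t B \<subseteq> {..<c}" if "0 < c"
  using that unfolding rot_def by auto

lemma card_rot: assumes "A \<subseteq> {..<h}" shows "card (rot c t (insert h A)) \<le> h + 1"
proof -
  have "card (rot c t (insert h A)) \<le> card (insert h A)" unfolding rot_def by (rule card_image_le) (use assms finite_subset in auto)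
  also have "\<dots> \<le> card A + 1" by (metis card_insert_le_m1 le_add2 diff_add_inverse2 card_insert_if
        add.commute add_Suc_right eq_imp_le finite_subset finite_lessThan assms plus_1_eq_Suc le_SucI)
  also have "card A \<le> h" using card_mono[OF _ assms] by simp
  finally show ?thesis by simp
qed



definition seg :: "nat \<Rightarrow> nat \<Rightarrow> nat \<Rightarrow> nat set list" where
  "seg c h t = map (\<lambda>A. rot c t (insert h A)) (gray h)"

fun CS :: "nat \<Rightarrow> nat \<Rightarrow> nat \<Rightarrow> nat set list" where
  "CS c h 0 = []"
| "CS c h (Suc t) = CS c h t @ seg c h t"

definition PL :: "nat \<Rightarrow> nat \<Rightarrow> nat set list" where
  "PL c h = {} # CS c h c"

lemma seg_ne: "seg c h t \<noteq> []" unfolding seg_def using gray_ne by simp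

lemma len_CS: "length (CS c h t) = t * 2 ^ h"
  by (induction t) (auto simp: seg_def gray_len)

lemma len_PL: "length (PL c h) = c * 2 ^ h + 1"
  unfolding PL_def by (simp add: len_CS)

lemma set_CS: "set (CS c h t) = (\<Union>u<t. set (seg c h u))"
  by (induction t) (auto simp: lessThan_Suc)

lemma set_seg: "X \<in> set (seg c h u) \<Longrightarrow> \<exists>A. A \<subseteq> {..<h} \<and> X = rot c u (insert h A)"
  unfolding seg_def using gray_sub by auto

lemma distinct_seg: assumes "2 * h < c" "u < c" shows "distinct (seg c h u)"
  unfolding seg_def
proof (rule distinct_map[THEN iffD2], intro conjI gray_distinct)
  show "inj_on (\<lambda>A. rot c u (insert h A)) (set (gray h))"
    using seg_unique[OF assms(1) _ _ assms(2) assms(2)] gray_sub by (meson inj_onI)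
qed

lemma distinct_CS: assumes "2 * h < c" shows "t \<le> c \<Longrightarrow> distinct (CS c h t)"
proof (induction t)
  case 0 then show ?case by simp
next
  case (Suc t)
  have "set (CS c h t) \<inter> set (seg c h t) = {}"
  proof (rule ccontr)
    assume "set (CS c h t) \<inter> set (seg c h t) \<noteq> {}"
    then obtain X u where X: "X \<in> set (seg c h u)" "u < t" "X \<in> set (seg c h t)" by (auto simp: set_CS)
    obtain A where A: "A \<subseteq> {..<h}" "X = rot c u (insert h A)" using set_seg[OF X(1)] by blast
    obtain A' where A': "A' \<subseteq> {..<h}" "X = rot c t (insert h A')" using set_seg[OF X(3)] by blast
    have "u = t" using seg_unique[OF assms A(1) A'(1)] X(2) Suc.prems A(2) A'(2) by auto
    then show False using X(2) by simp
  qed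
  then show ?case using Suc distinct_seg[OF assms, of t] by simp
qed

lemma set_PL: "X \<in> set (PL c h) \<Longrightarrow> X = {} \<or> (\<exists>u A. A \<subseteq> {..<h} \<and> X = rot c u (insert h A))"
proof -
  assume "X \<in> set (PL c h)"
  then have "X = {} \<or> X \<in> set (CS c h c)" unfolding PL_def by (simp only: set_simps insert_iff)
  moreover have "X \<in> set (CS c h c) \<Longrightarrow> \<exists>u A. A \<subseteq> {..<h} \<and> X = rot c u (insert h A)"
  proof -
    assume "X \<in> set (CS c h c)"
    then obtain u where "X \<in> set (seg c h u)" unfolding set_CS by auto
    then show ?thesis using set_seg[of X c h u] by blast
  qed
  ultimately show ?thesis by blast
qed

lemma PL_elem: assumes "2 * h < c" "X \<in> set (PL c h)"
  shows "X \<subseteq> {..<c}" "card X \<le> h + 1"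
proof -
  have c0: "0 < c" using assms(1) by simp
  show "X \<subseteq> {..<c}" using set_PL[OF assms(2)] rot_sub[OF c0] by blast
  show "card X \<le> h + 1" using set_PL[OF assms(2)] card_rot by (metis card.empty le0)
qed

lemma distinct_PL: assumes "2 * h < c" shows "distinct (PL c h)"
proof -
  have "{} \<notin> set (CS c h c)"
  proof
    assume "{} \<in> set (CS c h c)"
    then obtain u where "{} \<in> set (seg c h u)" unfolding set_CS by auto
    then obtain A where "{} = rot c u (insert h A)" using set_seg[of "{}" c h u] by blast
    then show False using rot_top[of h u c A] by simp
  qed
  then show ?thesis unfolding PL_def using distinct_CS[OF assms] by simp
qed



lemma dn_seg: assumes c: "2 * h < c" and r: "r < c" and u: "u < c"
  shows "dnP (\<lambda>A. r \<in> A) (seg c h u) = (if (r + c - u) mod c < h then Dg h ((r + c - u) mod c) else 0)"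
proof -
  define j where "j = (r + c - u) mod c"
  have "dnP (\<lambda>A. r \<in> A) (seg c h u) = dnP ((\<lambda>A. r \<in> A) \<circ> (\<lambda>A. rot c u (insert h A))) (gray h)"
    unfolding seg_def by (rule dnP_map)
  also have "\<dots> = dnP (\<lambda>A. j \<in> insert h A) (gray h)"
  proof (rule dnP_cong)
    fix A assume "A \<in> set (gray h)"
    then have "insert h A \<subseteq> {..<c}" using gray_sub[of A h] c by auto
    then show "((\<lambda>A. r \<in> A) \<circ> (\<lambda>A. rot c u (insert h A))) A = (j \<in> insert h A)"
      unfolding j_def using rot_mem[OF r u] by simp
  qed
  also have "\<dots> = (if j < h then Dg h j else 0)"
  proof (cases "j < h")
    case True
    then have "dnP (\<lambda>A. j \<in> insert h A) (gray h) = dnP (\<lambda>A. j \<in> A) (gray h)"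
      by (intro dnP_cong) auto
    then show ?thesis using True by (simp add: Dg_def)
  next
    case False
    then have "dnP (\<lambda>A. j \<in> insert h A) (gray h) = dnP (\<lambda>_. j = h) (gray h)"
      by (intro dnP_cong) (use gray_sub in fastforce)
    then show ?thesis using False by (simp add: dnP_const)
  qed
  finally show ?thesis unfolding j_def .
qed

lemma last_seg: "1 \<le> h \<Longrightarrow> last (seg c h u) = rot c u (insert h {h - 1})"
  unfolding seg_def using gray_ne by (simp add: last_map gray_last)

lemma last_CS: "0 < t \<Longrightarrow> last (CS c h t) = last (seg c h (t - 1))"
  by (cases t) (auto simp: seg_ne)

lemma rot_two: "rot c u (insert h {h - 1}) = {(h + u) mod c, (h - 1 + u) mod c}"
  unfolding rot_def by auto

definition Cj :: "nat \<Rightarrow> nat \<Rightarrow> nat \<Rightarrow> nat \<Rightarrow> nat" where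
  "Cj c h r u = (if r = (h - 1 + u) mod c then 1 else 0) + (if r = (h + u) mod c then 1 else 0)"

lemma dn_CS: assumes h: "1 \<le> h"
  shows "dnP (\<lambda>A. r \<in> A) ({} # CS c h t) \<le> (\<Sum>u<t. dnP (\<lambda>A. r \<in> A) (seg c h u)) + (\<Sum>u<t - 1. Cj c h r u)"
proof (induction t)
  case 0 then show ?case by simp
next
  case (Suc t)
  have e: "{} # CS c h (Suc t) = ({} # CS c h t) @ seg c h t" by simp
  have junc: "(if r \<in> last ({} # CS c h t) \<and> r \<notin> hd (seg c h t) then 1 else 0)
      \<le> (if t = 0 then 0 else Cj c h r (t - 1))"
  proof (cases t)
    case 0 then show ?thesis by simp
  next
    case (Suc t0)
    then have "last ({} # CS c h t) = rot c t0 (insert h {h - 1})"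
      using last_CS[of t c h] last_seg[OF h] by (simp add: seg_ne)
    then show ?thesis using Suc by (auto simp: rot_def Cj_def)
  qed
  have "dnP (\<lambda>A. r \<in> A) ({} # CS c h (Suc t)) = dnP (\<lambda>A. r \<in> A) ({} # CS c h t)
      + (if r \<in> last ({} # CS c h t) \<and> r \<notin> hd (seg c h t) then 1 else 0) + dnP (\<lambda>A. r \<in> A) (seg c h t)"
    unfolding e by (rule dnP_append) (simp_all add: seg_ne)
  moreover have "(\<Sum>u<t - 1. Cj c h r u) + (if t = 0 then 0 else Cj c h r (t - 1)) = (\<Sum>u<Suc t - 1. Cj c h r u)"
    by (cases t) auto
  moreover have "(\<Sum>u<Suc t. dnP (\<lambda>A. r \<in> A) (seg c h u)) = (\<Sum>u<t. dnP (\<lambda>A. r \<in> A) (seg c h u)) + dnP (\<lambda>A. r \<in> A) (seg c h t)"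
    by simp
  ultimately show ?case using Suc.IH junc by linarith
qed

lemma reindex_rev: fixes f :: "nat \<Rightarrow> 'a::comm_monoid_add" and c r :: nat assumes r: "r < c" shows "(\<Sum>u<c. f ((r + c - u) mod c)) = (\<Sum>j<c. f j)"
proof -
  have inj: "inj_on (\<lambda>u. (r + c - u) mod c) {..<c}"
  proof (rule inj_onI)
    fix u u' assume u: "u \<in> {..<c}" "u' \<in> {..<c}" "(r + c - u) mod c = (r + c - u') mod c"
    have "r + c - u = (c - 1 - u) + (r + 1)" "r + c - u' = (c - 1 - u') + (r + 1)" using u by auto
    then have "c - 1 - u = c - 1 - u'" using mod_cancel_lt[of "c - 1 - u" "r + 1" c "c - 1 - u'"] u by auto
    then show "u = u'" using u by auto
  qed
  have "(\<lambda>u. (r + c - u) mod c) ` {..<c} = {..<c}"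
    by (rule endo_inj_surj) (use inj r in auto)
  then have "bij_betw (\<lambda>u. (r + c - u) mod c) {..<c} {..<c}" using inj by (simp add: bij_betw_def)
  then show ?thesis by (rule sum.reindex_bij_betw)
qed

lemma ind_sum_le1: fixes c r a :: nat shows "(\<Sum>u<c. if r = (a + u) mod c then 1 else 0) \<le> (1::nat)"
proof -
  have "(\<Sum>u<c. if r = (a + u) mod c then 1 else (0::nat)) = (\<Sum>u\<in>{u \<in> {..<c}. r = (a + u) mod c}. 1)"
    by (rule sum.inter_filter[symmetric]) simp
  also have "\<dots> = card {u \<in> {..<c}. r = (a + u) mod c}" by simp
  also have "\<dots> \<le> Suc 0"
  proof (rule card_le_Suc0_iff_eq[THEN iffD2])
    show "finite {u \<in> {..<c}. r = (a + u) mod c}" by simp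
    show "\<forall>x\<in>{u \<in> {..<c}. r = (a + u) mod c}. \<forall>y\<in>{u \<in> {..<c}. r = (a + u) mod c}. x = y"
    proof (intro ballI)
      fix x y assume "x \<in> {u \<in> {..<c}. r = (a + u) mod c}" "y \<in> {u \<in> {..<c}. r = (a + u) mod c}"
      then have "(x + a) mod c = (y + a) mod c" "x < c" "y < c" by (auto simp: add.commute)
      then show "x = y" by (rule mod_cancel_lt)
    qed
  qed
  finally show ?thesis by simp
qed

lemma downs_PL: assumes h: "1 \<le> h" and c: "2 * h < c" and r: "r < c"
  shows "dnP (\<lambda>A. r \<in> A) (PL c h @ [{..<c}]) \<le> 2 ^ (h - 1) + 1"
proof -
  have "dnP (\<lambda>A. r \<in> A) (PL c h @ [{..<c}]) = dnP (\<lambda>A. r \<in> A) (PL c h)"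
    using r by (subst dnP_append) (auto simp: PL_def)
  also have "\<dots> \<le> (\<Sum>u<c. dnP (\<lambda>A. r \<in> A) (seg c h u)) + (\<Sum>u<c - 1. Cj c h r u)"
    unfolding PL_def by (rule dn_CS[OF h])
  also have "(\<Sum>u<c. dnP (\<lambda>A. r \<in> A) (seg c h u)) = (\<Sum>u<c. (\<lambda>j. if j < h then Dg h j else 0) ((r + c - u) mod c))"
    using dn_seg[OF c r] by simp
  also have "\<dots> = (\<Sum>j<c. if j < h then Dg h j else 0)" by (rule reindex_rev[OF r])
  also have "\<dots> = (\<Sum>j<h. Dg h j)"
  proof -
    have "{..<h} \<subseteq> {..<c}" using c by auto
    then show ?thesis by (simp add: sum.If_cases Int_absorb1 lessThan_def[symmetric])
  qed
  also have "\<dots> = 2 ^ (h - 1) - 1" by (rule downs_gray[OF h])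
  also have "(\<Sum>u<c - 1. Cj c h r u) \<le> (\<Sum>u<c. Cj c h r u)" by (rule sum_mono2) auto
  also have "(\<Sum>u<c. Cj c h r u) \<le> 2"
    unfolding Cj_def sum.distrib using ind_sum_le1[where c=c and r=r and a="h - 1"] ind_sum_le1[where c=c and r=r and a=h] by linarith
  finally show ?thesis by simp
qed



lemma sqgt_diff:
  assumes ne: "eta \<noteq> []" and T: "last eta = T" and y: "y1 < T" "T \<le> y2"
  shows "sqgt eta y1 \<noteq> sqgt eta y2"
proof -
  let ?A = "{k. k < length eta \<and> eta ! k \<le> y1}" and ?B = "{k. k < length eta \<and> eta ! k \<le> y2}"
  have sub: "?A \<subseteq> ?B" using y by auto
  have last: "length eta - 1 \<in> ?B - ?A" using ne T y by (simp add: last_conv_nth)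
  have "?A \<subset> ?B" using sub last by blast
  then have "card ?A < card ?B" by (rule psubset_card_mono[rotated]) simp
  then show ?thesis unfolding sqgt_def by simp
qed

lemma mod2L: fixes k L :: nat assumes L: "0 < L"
  shows "(k + L) mod (2*L) = (if k mod (2*L) < L then k mod (2*L) + L else k mod (2*L) - L)"
proof -
  define y where "y = k mod (2*L)"
  have y2: "y < 2 * L" unfolding y_def using L by simp
  have e: "(k + L) mod (2*L) = (y + L) mod (2*L)" unfolding y_def by (simp add: mod_add_left_eq)
  show ?thesis
  proof (cases "y < L")
    case True
    then have "(y + L) mod (2*L) = y + L" by simp
    then show ?thesis using e True y_def by simp
  next
    case False
    then have "y + L = (y - L) + 2 * L" by simp
    then have "(y + L) mod (2*L) = (y - L) mod (2*L)" by (metis mod_add_self2)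
    also have "\<dots> = y - L" using y2 False by (intro mod_less) simp
    finally show ?thesis using e False y_def by simp
  qed
qed

lemma card_sum: fixes P :: "nat \<Rightarrow> bool"
  shows "card {y. y < L \<and> P y} = (\<Sum>y<L. if P y then 1 else 0)"
proof -
  have "(\<Sum>y<L. if P y then 1 else (0::nat)) = (\<Sum>u\<in>{u \<in> {..<L}. P u}. 1)"
    by (rule sum.inter_filter[symmetric]) simp
  also have "\<dots> = card {u \<in> {..<L}. P u}" by simp
  also have "{u \<in> {..<L}. P u} = {y. y < L \<and> P y}" by auto
  finally show ?thesis by simp
qed

definition Code :: "nat \<Rightarrow> nat \<Rightarrow> nat \<Rightarrow> nat set" where
  "Code c h q = (if q < c * 2 ^ h + 1 then PL c h ! q else {..<c} - PL c h ! (q - (c * 2 ^ h + 1)))"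

definition Bf :: "nat \<Rightarrow> nat \<Rightarrow> nat \<Rightarrow> nat \<Rightarrow> bool" where
  "Bf c h r k = (r \<in> Code c h (k mod (2 * (c * 2 ^ h + 1))))"

lemma Bf_anti: assumes c: "2 * h < c" and r: "r < c"
  shows "Bf c h r (k + (c * 2 ^ h + 1)) = (\<not> Bf c h r k)"
proof -
  define L where "L = c * 2 ^ h + 1"
  have L: "0 < L" unfolding L_def by simp
  define q where "q = k mod (2 * L)"
  have q2: "q < 2 * L" unfolding q_def using L by simp
  have sub: "PL c h ! p \<subseteq> {..<c}" if "p < L" for p
    using PL_elem(1)[OF c] that len_PL[of c h] unfolding L_def by (simp add: nth_mem)
  show ?thesis
  proof (cases "q < L")
    case True
    then show ?thesis using mod2L[OF L, of k] r unfolding Bf_def Code_def L_def[symmetric] q_def[symmetric]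
      by simp
  next
    case False
    then have "q - L < L" using q2 by simp
    then show ?thesis using mod2L[OF L, of k] r sub[of "q - L"] False unfolding Bf_def Code_def L_def[symmetric] q_def[symmetric]
      by auto
  qed
qed

lemma Code_distinct: assumes c: "2 * (h + 1) < c"
  and q: "q < 2 * (c * 2 ^ h + 1)" "q' < 2 * (c * 2 ^ h + 1)" "q \<noteq> q'"
  shows "Code c h q \<noteq> Code c h q'"
proof -
  define L where "L = c * 2 ^ h + 1"
  have c': "2 * h < c" using c by simp
  have lenL: "length (PL c h) = L" unfolding L_def by (simp add: len_PL)
  have sub: "PL c h ! p \<subseteq> {..<c}" "card (PL c h ! p) \<le> h + 1" if "p < L" for p
    using PL_elem[OF c'] that lenL by (simp_all add: nth_mem)
  have dist: "PL c h ! p = PL c h ! p' \<Longrightarrow> p < L \<Longrightarrow> p' < L \<Longrightarrow> p = p'" for p p'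
    using distinct_PL[OF c'] lenL by (simp add: nth_eq_iff_index_eq)
  have comp: "PL c h ! p \<noteq> {..<c} - PL c h ! p'" if "p < L" "p' < L" for p p'
  proof
    assume e: "PL c h ! p = {..<c} - PL c h ! p'"
    have "card ({..<c} - PL c h ! p') = c - card (PL c h ! p')"
      using sub(1)[OF that(2)] by (simp add: card_Diff_subset finite_subset)
    then show False using e sub(2)[OF that(1)] sub(2)[OF that(2)] c by simp
  qed
  have C1: "Code c h p = PL c h ! p" if "p < L" for p using that unfolding Code_def L_def by simp
  have C2: "Code c h p = {..<c} - PL c h ! (p - L)" if "\<not> p < L" for p using that unfolding Code_def L_def by simp
  have qL: "q - L < L" "q' - L < L" using q unfolding L_def by auto
  show ?thesis
  proof (cases "q < L"; cases "q' < L")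
    assume a: "q < L" "q' < L"
    show ?thesis unfolding C1[OF a(1)] C1[OF a(2)] using dist[of q q'] a q(3) by blast
  next
    assume a: "q < L" "\<not> q' < L"
    show ?thesis unfolding C1[OF a(1)] C2[OF a(2)] by (rule comp[OF a(1) qL(2)])
  next
    assume a: "\<not> q < L" "q' < L"
    show ?thesis unfolding C2[OF a(1)] C1[OF a(2)] using comp[OF a(2) qL(1)] by metis
  next
    assume a: "\<not> q < L" "\<not> q' < L"
    have "q - L \<noteq> q' - L" using a q(3) by simp
    then have "PL c h ! (q - L) \<noteq> PL c h ! (q' - L)" using dist[OF _ qL] by blast
    moreover have "PL c h ! (q - L) \<subseteq> {..<c}" "PL c h ! (q' - L) \<subseteq> {..<c}" using sub(1) qL by auto
    ultimately have "{..<c} - PL c h ! (q - L) \<noteq> {..<c} - PL c h ! (q' - L)" by (metis Diff_Diff_Int inf.absorb2)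
    then show ?thesis unfolding C2[OF a(1)] C2[OF a(2)] .
  qed
qed

lemma Bf_distinct: assumes c: "2 * (h + 1) < c"
  and ij: "i \<noteq> j" "i < j + 2 * (c * 2 ^ h + 1)" "j < i + 2 * (c * 2 ^ h + 1)"
  shows "\<exists>r<c. Bf c h r i \<noteq> Bf c h r j"
proof -
  define M where "M = 2 * (c * 2 ^ h + 1)"
  have M: "0 < M" unfolding M_def by simp
  have ne: "i mod M \<noteq> j mod M"
  proof
    assume e: "i mod M = j mod M"
    show False
    proof (cases "i < j")
      case True
      then have "M dvd j - i" using e mod_eq_dvd_iff_nat[of i j M] by simp
      moreover have "0 < j - i" "j - i < M" using True ij unfolding M_def by auto
      ultimately show False using nat_dvd_not_less by blast
    next
      case False
      then have "j < i" using ij by simp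
      then have "M dvd i - j" using e mod_eq_dvd_iff_nat[of j i M] by simp
      moreover have "0 < i - j" "i - j < M" using \<open>j < i\<close> ij unfolding M_def by auto
      ultimately show False using nat_dvd_not_less by blast
    qed
  qed
  have "Code c h (i mod M) \<noteq> Code c h (j mod M)"
    using Code_distinct[OF c _ _ ne] M unfolding M_def by simp
  moreover have "Code c h q \<subseteq> {..<c}" if "q < M" for q
  proof -
    have c': "2 * h < c" using c by simp
    have "PL c h ! p \<subseteq> {..<c}" if "p < c * 2 ^ h + 1" for p
      using PL_elem(1)[OF c'] that len_PL[of c h] by (simp add: nth_mem)
    then show ?thesis using that unfolding Code_def M_def by auto
  qed
  moreover have "i mod M < M" "j mod M < M" using M by auto
  ultimately have ne2: "Code c h (i mod M) \<noteq> Code c h (j mod M)" and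
    s1: "Code c h (i mod M) \<subseteq> {..<c}" and s2: "Code c h (j mod M) \<subseteq> {..<c}" by auto
  obtain r where r: "(r \<in> Code c h (i mod M)) \<noteq> (r \<in> Code c h (j mod M))" using ne2 by blast
  then have "r < c" using s1 s2 by blast
  note r = this r
  then show ?thesis unfolding Bf_def M_def[symmetric] by blast
qed

lemma row_real: assumes h: "1 \<le> h" and c: "2 * (h + 1) < c" and r: "r < c"
  shows "\<exists>s. (\<forall>x. s x \<le> (1::nat)) \<and>
    (\<forall>i. (\<Sum>d<c * 2 ^ h + 1. s (i + d)) = 2 ^ (h - 1) + 1 + (if Bf c h r i then 1 else 0))"
proof -
  define L where "L = c * 2 ^ h + 1"
  define V where "V = (2::nat) ^ (h - 1) + 1"
  define xs where "xs = PL c h @ [{..<c}]"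
  have c': "2 * h < c" using c by simp
  have L: "0 < L" unfolding L_def by simp
  have lenPL: "length (PL c h) = L" unfolding L_def by (simp add: len_PL)
  have lenxs: "length xs - 1 = L" unfolding xs_def using lenPL by simp
  have anti: "\<And>x. Bf c h r (x + L) = (\<not> Bf c h r x)" unfolding L_def by (rule Bf_anti[OF c' r])
  have PL0: "PL c h ! 0 = {}" unfolding PL_def by simp
  have b0: "\<not> Bf c h r 0" unfolding Bf_def Code_def using PL0 by simp
  have bL: "Bf c h r L" using anti[of 0] b0 by simp
  have bY: "Bf c h r y = (r \<in> xs ! y)" if "y < L" for y
  proof -
    have "y mod (2 * L) = y" using that by simp
    then show ?thesis using that lenPL unfolding Bf_def Code_def xs_def L_def[symmetric] by (simp add: nth_append)
  qed
  have bSy: "Bf c h r (Suc y) = (r \<in> xs ! Suc y)" if "y < L" for y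
  proof (cases "Suc y < L")
    case True then show ?thesis using bY by simp
  next
    case False
    then have "Suc y = L" using that by simp
    moreover have "xs ! L = {..<c}" unfolding xs_def using lenPL by (simp add: nth_append)
    ultimately show ?thesis using bL r by simp
  qed
  have DN: "card {y. y < L \<and> Bf c h r y \<and> \<not> Bf c h r (Suc y)} \<le> V"
  proof -
    have "card {y. y < L \<and> Bf c h r y \<and> \<not> Bf c h r (Suc y)}
        = (\<Sum>y<L. if Bf c h r y \<and> \<not> Bf c h r (Suc y) then 1 else 0)"
      using card_sum[of L "\<lambda>y. Bf c h r y \<and> \<not> Bf c h r (Suc y)"] by simp
    also have "\<dots> = (\<Sum>y<L. if r \<in> xs ! y \<and> r \<notin> xs ! Suc y then 1 else 0)"
      by (rule sum.cong) (auto simp: bY bSy)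
    also have "\<dots> = dnP (\<lambda>A. r \<in> A) xs" unfolding dnP_sum lenxs ..
    also have "\<dots> \<le> V" unfolding xs_def V_def by (rule downs_PL[OF h c' r])
    finally show ?thesis .
  qed
  have UP: "card {y. y < L \<and> \<not> Bf c h r y \<and> Bf c h r (Suc y)} = card {y. y < L \<and> Bf c h r y \<and> \<not> Bf c h r (Suc y)} + 1"
    using updown[of L "Bf c h r"] b0 bL by simp
  have pow: "(2::nat) ^ h = 2 * 2 ^ (h - 1)" using h by (metis Suc_diff_1 less_le_trans power_Suc zero_less_one)
  have "V + (if Bf c h r 0 then 1 else 0) + card {y. y < L \<and> \<not> Bf c h r y \<and> Bf c h r (Suc y)} \<le> L"
  proof -
    have "V + card {y. y < L \<and> \<not> Bf c h r y \<and> Bf c h r (Suc y)} \<le> 2 * V + 1" using UP DN by simp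
    also have "2 * V + 1 = 2 ^ h + 3" unfolding V_def using pow by simp
    also have "\<dots> \<le> 3 * 2 ^ h + 1" by simp
    also have "\<dots> \<le> c * 2 ^ h + 1" using c by simp
    finally show ?thesis using b0 unfolding L_def by simp
  qed
  then have "\<exists>s. (\<forall>x. s x \<le> (1::nat)) \<and> (\<forall>i. (\<Sum>d<L. s (i + d)) = V + (if Bf c h r i then 1 else 0))"
    using realize[where b="Bf c h r" and L=L and V=V, OF anti L] DN b0 by simp
  then show ?thesis unfolding L_def V_def .
qed

lemma mv_sum: assumes "i + L \<le> n"
  shows "(\<Sum>k<n. f k * burst n L i k) = (\<Sum>d<L. f (i + d))"
proof -
  have "(\<Sum>k<n. f k * burst n L i k) = (\<Sum>k<n. if i \<le> k \<and> k < i + L \<and> k < n then f k else 0)"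
    unfolding burst_def by (intro sum.cong) auto
  also have "\<dots> = (\<Sum>k\<in>{k \<in> {..<n}. i \<le> k \<and> k < i + L \<and> k < n}. f k)"
    by (rule sum.inter_filter[symmetric]) simp
  also have "{k \<in> {..<n}. i \<le> k \<and> k < i + L \<and> k < n} = {0 + i..<L + i}" using assms by auto
  also have "(\<Sum>k\<in>{0 + i..<L + i}. f k) = (\<Sum>d\<in>{0..<L}. f (d + i))" by (rule sum.shift_bounds_nat_ivl)
  finally show ?thesis by (simp add: atLeast0LessThan add.commute)
qed

theorem mainTheorem7:
  fixes c h n :: nat
  assumes "c > 2 * (h + 1)"
    and "n \<ge> c * 2 ^ h + 1"
  shows "\<exists>R :: nat \<Rightarrow> nat \<Rightarrow> nat.
           (\<forall>r<c. \<forall>k<n. R r k \<le> 1) \<and>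
           (\<forall>eta :: nat list.
              eta \<noteq> [] \<and> sorted_wrt (<) eta \<and> (\<forall>x\<in>set eta. 0 < x) \<and>
              2 * last eta = 2 ^ h + 4 \<longrightarrow>
              (\<forall>i j. i \<le> n - (c * 2 ^ h + 1) \<and> j \<le> n - (c * 2 ^ h + 1) \<and>
                     i \<noteq> j \<and> i < j + 2 * (c * 2 ^ h + 1) \<and> j < i + 2 * (c * 2 ^ h + 1) \<longrightarrow>
                 sqgt_vec eta (matvec c n R (burst n (c * 2 ^ h + 1) i)) \<noteq>
                 sqgt_vec eta (matvec c n R (burst n (c * 2 ^ h + 1) j))))"
proof (cases "h = 0")
  case True
  have "\<And>x::nat. 2 * x \<noteq> 2 ^ 0 + 4" by simp presburger
  then show ?thesis using True by (intro exI[of _ "\<lambda>_ _. 0"]) auto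
next
  case False
  then have h: "1 \<le> h" by simp
  note c = assms(1)
  define L where "L = c * 2 ^ h + 1"
  define V where "V = (2::nat) ^ (h - 1) + 1"
  have "\<forall>r. \<exists>s. r < c \<longrightarrow> (\<forall>x. s x \<le> (1::nat)) \<and>
    (\<forall>i. (\<Sum>d<L. s (i + d)) = V + (if Bf c h r i then 1 else 0))"
    using row_real[OF h c] unfolding L_def V_def by blast
  then obtain S where S: "\<And>r. r < c \<Longrightarrow> (\<forall>x. S r x \<le> (1::nat)) \<and>
    (\<forall>i. (\<Sum>d<L. S r (i + d)) = V + (if Bf c h r i then 1 else 0))" by metis
  have pow: "(2::nat) ^ h = 2 * 2 ^ (h - 1)" using h by (metis Suc_diff_1 less_le_trans power_Suc zero_less_one)
  show ?thesis
  proof (intro exI[of _ S] conjI allI impI)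
    fix r k :: nat assume "r < c" "k < n"
    then show "S r k \<le> 1" using S by blast
  next
    fix eta :: "nat list" and i j
    assume eta: "eta \<noteq> [] \<and> sorted_wrt (<) eta \<and> (\<forall>x\<in>set eta. 0 < x) \<and> 2 * last eta = 2 ^ h + 4"
    assume ij: "i \<le> n - (c * 2 ^ h + 1) \<and> j \<le> n - (c * 2 ^ h + 1) \<and>
        i \<noteq> j \<and> i < j + 2 * (c * 2 ^ h + 1) \<and> j < i + 2 * (c * 2 ^ h + 1)"
    have T: "last eta = V + 1" using eta pow unfolding V_def by simp
    obtain r where r: "r < c" "Bf c h r i \<noteq> Bf c h r j"
      using Bf_distinct[OF c] ij by blast
    have cnt: "matvec c n S (burst n L k) ! r = V + (if Bf c h r k then 1 else 0)" if "k + L \<le> n" for k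
    proof -
      have "matvec c n S (burst n L k) ! r = (\<Sum>x<n. S r x * burst n L k x)"
        unfolding matvec_def using r by simp
      also have "\<dots> = (\<Sum>d<L. S r (k + d))" by (rule mv_sum[OF that])
      also have "\<dots> = V + (if Bf c h r k then 1 else 0)" using S[OF r(1)] by blast
      finally show ?thesis .
    qed
    have iL: "i + L \<le> n" "j + L \<le> n" using ij assms(2) unfolding L_def by auto
    have len: "length (matvec c n S x) = c" for x unfolding matvec_def by simp
    show "sqgt_vec eta (matvec c n S (burst n (c * 2 ^ h + 1) i)) \<noteq>
          sqgt_vec eta (matvec c n S (burst n (c * 2 ^ h + 1) j))"
    proof
      assume e: "sqgt_vec eta (matvec c n S (burst n (c * 2 ^ h + 1) i)) =
          sqgt_vec eta (matvec c n S (burst n (c * 2 ^ h + 1) j))"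
      have "sqgt eta (matvec c n S (burst n L i) ! r) = sqgt eta (matvec c n S (burst n L j) ! r)"
        using arg_cong[OF e, of "\<lambda>xs. xs ! r"] r(1) len unfolding sqgt_vec_def L_def by simp
      then have "sqgt eta (V + (if Bf c h r i then 1 else 0)) = sqgt eta (V + (if Bf c h r j then 1 else 0))"
        using cnt iL by simp
      moreover have "sqgt eta V \<noteq> sqgt eta (V + 1)"
        using sqgt_diff[of eta "V + 1" V "V + 1"] eta T by simp
      ultimately show False using r(2) by (cases "Bf c h r i") auto
    qed
  qed
qed


end
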